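(* For every state $x$ and every round $t\ge1$, \[ \sum_{i\in V}\frac{\operatorname{Var}[W_i(X^t)\mid X^{t-1}=x]}{s_i} \le \sum_{(i,j)} f_{ij}(x)\left(\frac{1}{s_i}+\frac{1}{s_j}\right), \] where the sum on the right runs over all ordered pairs $(i,j)$ of adjacent processors with $\ell_i(x)-\ell_j(x)>1/s_j$, and $f_{ij}(x)=\frac{\ell_i(x)-\ell_j(x)}{\alpha\, d_{ij}\,(1/s_i+1/s_j)}$.
   Context: $G=(V,E)$ is an undirected graph (processors as vertices); $\deg(i)$ is the degree and $d_{ij}=\max\{\deg(i),\deg(j)\}$. Processor $i$ has speed $s_i>0$; $s_{\max}=\max_i s_i$; $\alpha=4s_{\max}$. Task $\ell$ has weight $w_\ell\in(0,1]$. In state $x$, $W_i(x)$ is the total weight on processor $i$ and $\ell_i(x)=W_i(x)/s_i$. Protocol: in each round every task, independently, with $i$ its current processor, chooses a uniformly random neighbor $j$; if $\ell_i-\ell_j>1/s_j$ it moves to $j$ with probability $\frac{\deg(i)}{d_{ij}}\cdot\frac{\ell_i-\ell_j}{\alpha(1/s_i+1/s_j)W_i}$, otherwise stays. $X^t$ is the state after $t$ rounds. *)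

theory Defs
  imports "HOL-Probability.Probability"
begin

text \<open>Graph: symmetric irreflexive adjacency relation E on a finite vertex type 'v.
  Tasks form a finite type 'k; a state is an assignment x :: 'k => 'v.\<close>

definition deg :: "('v \<Rightarrow> 'v \<Rightarrow> bool) \<Rightarrow> 'v \<Rightarrow> nat" where
  "deg E i = card {j. E i j}"

definition dmax :: "('v \<Rightarrow> 'v \<Rightarrow> bool) \<Rightarrow> 'v \<Rightarrow> 'v \<Rightarrow> nat" where
  "dmax E i j = max (deg E i) (deg E j)"

definition Wt :: "('k::finite \<Rightarrow> real) \<Rightarrow> ('k \<Rightarrow> 'v) \<Rightarrow> 'v \<Rightarrow> real" where
  "Wt w x i = (\<Sum>l\<in>{l. x l = i}. w l)"

definition load :: "('v \<Rightarrow> real) \<Rightarrow> ('k::finite \<Rightarrow> real) \<Rightarrow> ('k \<Rightarrow> 'v) \<Rightarrow> 'v \<Rightarrow> real" where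
  "load s w x i = Wt w x i / s i"

definition alpha :: "('v::finite \<Rightarrow> real) \<Rightarrow> real" where
  "alpha s = 4 * Max (range s)"

definition move_prob :: "('v::finite \<Rightarrow> 'v \<Rightarrow> bool) \<Rightarrow> ('v \<Rightarrow> real) \<Rightarrow> ('k::finite \<Rightarrow> real)
    \<Rightarrow> ('k \<Rightarrow> 'v) \<Rightarrow> 'v \<Rightarrow> 'v \<Rightarrow> real" where
  "move_prob E s w x i j =
     (if load s w x i - load s w x j > 1 / s j
      then real (deg E i) / real (dmax E i j) *
           ((load s w x i - load s w x j) / (alpha s * (1 / s i + 1 / s j) * Wt w x i))
      else 0)"

definition task_step :: "('v::finite \<Rightarrow> 'v \<Rightarrow> bool) \<Rightarrow> ('v \<Rightarrow> real) \<Rightarrow> ('k::finite \<Rightarrow> real)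
    \<Rightarrow> ('k \<Rightarrow> 'v) \<Rightarrow> 'k \<Rightarrow> 'v pmf" where
  "task_step E s w x l =
     (let i = x l in
      if {j. E i j} = {} then return_pmf i
      else bind_pmf (pmf_of_set {j. E i j}) (\<lambda>j.
             bind_pmf (bernoulli_pmf (move_prob E s w x i j)) (\<lambda>b.
               return_pmf (if b then j else i))))"

text \<open>Distribution of X^t given X^(t-1) = x: all tasks move independently.\<close>
definition round_pmf :: "('v::finite \<Rightarrow> 'v \<Rightarrow> bool) \<Rightarrow> ('v \<Rightarrow> real) \<Rightarrow> ('k::finite \<Rightarrow> real)
    \<Rightarrow> ('k \<Rightarrow> 'v) \<Rightarrow> ('k \<Rightarrow> 'v) pmf" where
  "round_pmf E s w x = Pi_pmf UNIV undefined (\<lambda>l. task_step E s w x l)"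

definition flow :: "('v::finite \<Rightarrow> 'v \<Rightarrow> bool) \<Rightarrow> ('v \<Rightarrow> real) \<Rightarrow> ('k::finite \<Rightarrow> real)
    \<Rightarrow> ('k \<Rightarrow> 'v) \<Rightarrow> 'v \<Rightarrow> 'v \<Rightarrow> real" where
  "flow E s w x i j = (load s w x i - load s w x j) /
      (alpha s * real (dmax E i j) * (1 / s i + 1 / s j))"

end

theory Submission
  imports Defs
begin


lemma integrable_fin[simp]: "integrable (measure_pmf (M :: ('a::finite) pmf)) (f :: 'a \<Rightarrow> real)"
  by (rule integrable_measure_pmf_finite) simp

lemma Pi_comp_exp:
  fixes p :: "'k::finite \<Rightarrow> 'v::finite pmf" and g :: "'v \<Rightarrow> real"
  shows "measure_pmf.expectation (Pi_pmf UNIV d p) (\<lambda>y. g (y l)) = measure_pmf.expectation (p l) g"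
proof -
  have eq: "map_pmf (\<lambda>y. y l) (Pi_pmf UNIV d p) = p l"
    using Pi_pmf_component[of "UNIV :: 'k set" l d p] by simp
  have "measure_pmf.expectation (Pi_pmf UNIV d p) (\<lambda>y. g (y l))
      = measure_pmf.expectation (map_pmf (\<lambda>y. y l) (Pi_pmf UNIV d p)) g"
    by simp
  then show ?thesis by (simp only: eq)
qed

lemma Pi_indep_pair:
  fixes p :: "'k::finite \<Rightarrow> 'v::finite pmf" and Z :: "'k \<Rightarrow> 'v \<Rightarrow> real"
  assumes "l \<noteq> m"
  shows "measure_pmf.expectation (Pi_pmf UNIV d p) (\<lambda>y. Z l (y l) * Z m (y m))
     = measure_pmf.expectation (p l) (Z l) * measure_pmf.expectation (p m) (Z m)"
proof -
  let ?P = "Pi_pmf (UNIV::'k set) d p"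
  have ind: "prob_space.indep_vars (measure_pmf ?P) (\<lambda>_. count_space UNIV) (\<lambda>x f. f x) UNIV"
    by (rule indep_vars_Pi_pmf) simp
  have ind2: "prob_space.indep_vars (measure_pmf ?P) (\<lambda>_. borel) (\<lambda>l y. Z l (y l)) (insert l {m})"
    using prob_space.indep_vars_subset[OF prob_space_measure_pmf 
        prob_space.indep_vars_compose2[OF prob_space_measure_pmf ind, of Z "\<lambda>_. borel"]]
    by auto
  have "prob_space.indep_var (measure_pmf ?P) borel (\<lambda>y. Z l (y l)) borel (\<lambda>\<omega>. \<Sum>i\<in>{m}. Z i (\<omega> i))"
    using prob_space.indep_vars_sum[OF prob_space_measure_pmf _ _ ind2] assms by auto
  then have "prob_space.indep_var (measure_pmf ?P) borel (\<lambda>y. Z l (y l)) borel (\<lambda>y. Z m (y m))"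
    by simp
  from prob_space.indep_var_lebesgue_integral[OF prob_space_measure_pmf this]
  show ?thesis by (simp add: Pi_comp_exp)
qed

lemma Pi_var_sum:
  fixes p :: "'k::finite \<Rightarrow> 'v::finite pmf" and Z :: "'k \<Rightarrow> 'v \<Rightarrow> real"
  shows "measure_pmf.variance (Pi_pmf UNIV d p) (\<lambda>y. \<Sum>l\<in>UNIV. Z l (y l))
     = (\<Sum>l\<in>UNIV. measure_pmf.variance (p l) (Z l))"
proof -
  let ?P = "Pi_pmf (UNIV::'k set) d p"
  define \<mu> where "\<mu> l = measure_pmf.expectation (p l) (Z l)" for l
  define D where "D l v = Z l v - \<mu> l" for l v
  have ED: "measure_pmf.expectation (p l) (D l) = 0" for l
    unfolding D_def \<mu>_def by (simp add: prob_space.prob_space prob_space_measure_pmf)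
  have EX: "measure_pmf.expectation ?P (\<lambda>y. \<Sum>l\<in>UNIV. Z l (y l)) = (\<Sum>l\<in>UNIV. \<mu> l)"
    by (simp add: Pi_comp_exp \<mu>_def)
  have "measure_pmf.variance ?P (\<lambda>y. \<Sum>l\<in>UNIV. Z l (y l))
      = measure_pmf.expectation ?P (\<lambda>y. (\<Sum>l\<in>UNIV. D l (y l))^2)"
    by (simp add: EX D_def sum_subtractf)
  also have "\<dots> = measure_pmf.expectation ?P (\<lambda>y. \<Sum>l\<in>UNIV. \<Sum>m\<in>UNIV. D l (y l) * D m (y m))"
    by (simp add: power2_eq_square sum_product)
  also have "\<dots> = (\<Sum>l\<in>UNIV. \<Sum>m\<in>UNIV. measure_pmf.expectation ?P (\<lambda>y. D l (y l) * D m (y m)))"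
    by simp
  also have "\<dots> = (\<Sum>l\<in>UNIV. measure_pmf.expectation ?P (\<lambda>y. D l (y l) * D l (y l)))"
  proof (rule sum.cong[OF refl])
    fix l
    have "(\<Sum>m\<in>UNIV. measure_pmf.expectation ?P (\<lambda>y. D l (y l) * D m (y m)))
       = (\<Sum>m\<in>UNIV. if m = l then measure_pmf.expectation ?P (\<lambda>y. D l (y l) * D l (y l)) else 0)"
      by (rule sum.cong) (auto simp: Pi_indep_pair ED)
    then show "(\<Sum>m\<in>UNIV. measure_pmf.expectation ?P (\<lambda>y. D l (y l) * D m (y m)))
       = measure_pmf.expectation ?P (\<lambda>y. D l (y l) * D l (y l))" by simp
  qed
  also have "\<dots> = (\<Sum>l\<in>UNIV. measure_pmf.variance (p l) (Z l))"
  proof (rule sum.cong[OF refl])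
    fix l
    show "measure_pmf.expectation ?P (\<lambda>y. D l (y l) * D l (y l)) = measure_pmf.variance (p l) (Z l)"
      using Pi_comp_exp[where g="\<lambda>v. D l v * D l v" and p=p and l=l and d=d]
      by (simp add: D_def \<mu>_def power2_eq_square)
  qed
  finally show ?thesis .
qed




context begin
interpretation pmf_as_function .
lemma bern_clamp: "bernoulli_pmf p = bernoulli_pmf (max 0 (min 1 p))"
  by transfer (auto simp: fun_eq_iff)
end

definition rr :: "('v::finite \<Rightarrow> 'v \<Rightarrow> bool) \<Rightarrow> ('v \<Rightarrow> real) \<Rightarrow> ('k::finite \<Rightarrow> real)
    \<Rightarrow> ('k \<Rightarrow> 'v) \<Rightarrow> 'v \<Rightarrow> 'v \<Rightarrow> real" where
  "rr E s w x k j = (if E k j then move_prob E s w x k j / real (deg E k) else 0)"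

lemma alpha_pos: "\<forall>i. s i > 0 \<Longrightarrow> alpha (s :: 'v::finite \<Rightarrow> real) > 0"
proof -
  assume a: "\<forall>i. s i > 0"
  have "s undefined \<le> Max (range s)" by (rule Max_ge) auto
  then show ?thesis unfolding alpha_def using a by (smt (verit))
qed

lemma Wt_nonneg: "\<forall>l. 0 < w l \<Longrightarrow> Wt w x i \<ge> 0"
  unfolding Wt_def by (simp add: sum_nonneg less_imp_le)

lemma load_nonneg: "\<forall>l. 0 < w l \<Longrightarrow> \<forall>i. s i > 0 \<Longrightarrow> load s w x i \<ge> 0"
  unfolding load_def using Wt_nonneg[of w x i] by (simp add: divide_nonneg_pos)

lemma mp_nonneg:
  assumes "\<forall>l. 0 < w l" "\<forall>i. s i > 0"
  shows "move_prob E s w x i j \<ge> 0"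
proof -
  have a: "alpha s > 0" using alpha_pos[OF assms(2)] .
  have W: "Wt w x i \<ge> 0" using Wt_nonneg[OF assms(1)] .
  have si: "1 / s i + 1 / s j > 0" using assms by (simp add: add_pos_pos)
  have den: "alpha s * (1 / s i + 1 / s j) * Wt w x i \<ge> 0"
    using a W si by (intro mult_nonneg_nonneg) simp_all
  show ?thesis
  proof (cases "load s w x i - load s w x j > 1 / s j")
    case True
    have sj: "1 / s j > 0" using assms by simp
    have "(load s w x i - load s w x j) / (alpha s * (1 / s i + 1 / s j) * Wt w x i) \<ge> 0"
      using True sj den by (intro divide_nonneg_nonneg) linarith+
    moreover have "real (deg E i) / real (dmax E i j) \<ge> 0" by simp
    ultimately have "real (deg E i) / real (dmax E i j) * ((load s w x i - load s w x j) / (alpha s * (1 / s i + 1 / s j) * Wt w x i)) \<ge> 0"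
      by (intro mult_nonneg_nonneg)
    then show ?thesis unfolding move_prob_def using True by (simp only: if_True)
  qed (simp add: move_prob_def)
qed

lemma rr_nonneg: "\<forall>l. 0 < w l \<Longrightarrow> \<forall>i. s i > 0 \<Longrightarrow> rr E s w x k j \<ge> 0"
  unfolding rr_def using mp_nonneg[of w s E x k j] by simp

lemma inner_pmf:
  assumes "j \<noteq> k"
  shows "pmf (bind_pmf (bernoulli_pmf q) (\<lambda>b. return_pmf (if b then j else k))) v
     = (if v = j then max 0 (min 1 q) else 0) + (if v = k then 1 - max 0 (min 1 q) else 0)"
  apply (subst bern_clamp)
  apply (subst pmf_bind)
  apply (subst integral_bernoulli_pmf)
  using assms by (auto simp: pmf_return)




lemma task_pmf_nonempty:
  assumes irrefl: "\<forall>i. \<not> E i i" and ne: "{j. E (x l) j} \<noteq> {}"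
  shows "pmf (task_step E s w x l) v = (\<Sum>j\<in>{j. E (x l) j}.
     (if v = j then max 0 (min 1 (move_prob E s w x (x l) j)) else 0)
     + (if v = x l then 1 - max 0 (min 1 (move_prob E s w x (x l) j)) else 0)) / real (deg E (x l))"
proof -
  have "pmf (task_step E s w x l) v = (\<Sum>j\<in>{j. E (x l) j}. pmf (bind_pmf (bernoulli_pmf (move_prob E s w x (x l) j))
          (\<lambda>b. return_pmf (if b then j else x l))) v) / real (card {j. E (x l) j})"
    unfolding task_step_def Let_def using ne by (auto simp: pmf_bind_pmf_of_set)
  also have "\<dots> = (\<Sum>j\<in>{j. E (x l) j}.
     (if v = j then max 0 (min 1 (move_prob E s w x (x l) j)) else 0)
     + (if v = x l then 1 - max 0 (min 1 (move_prob E s w x (x l) j)) else 0)) / real (card {j. E (x l) j})"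
    apply (rule arg_cong2[where f="(/)"])
     apply (rule sum.cong[OF refl])
     apply (subst inner_pmf)
    using irrefl by auto
  finally show ?thesis unfolding deg_def .
qed

lemma task_stay:
  assumes irrefl: "\<forall>i. \<not> E i i" and wpos: "\<forall>l. 0 < w l" and spos: "\<forall>i. s i > 0"
  shows "1 - pmf (task_step E s w x l) (x l) \<le> (\<Sum>j\<in>UNIV. rr E s w x (x l) j)"
proof (cases "{j. E (x l) j} = {}")
  case True
  then have "task_step E s w x l = return_pmf (x l)" unfolding task_step_def Let_def by simp
  then show ?thesis using rr_nonneg[OF wpos spos] by (simp add: sum_nonneg)
next
  case False
  let ?N = "{j. E (x l) j}"
  let ?c = "\<lambda>j. max 0 (min 1 (move_prob E s w x (x l) j))"
  have dpos: "real (deg E (x l)) > 0" using False unfolding deg_def by (simp add: card_gt_0_iff)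
  have "pmf (task_step E s w x l) (x l) = (\<Sum>j\<in>?N. 1 - ?c j) / real (deg E (x l))"
    unfolding task_pmf_nonempty[where E=E and x=x and l=l, OF irrefl False]
    apply (rule arg_cong2[where f="(/)"])
     apply (rule sum.cong[OF refl])
    using irrefl by auto
  also have "\<dots> = 1 - (\<Sum>j\<in>?N. ?c j) / real (deg E (x l))"
    using dpos False unfolding deg_def by (simp add: sum_subtractf diff_divide_distrib)
  finally have "1 - pmf (task_step E s w x l) (x l) = (\<Sum>j\<in>?N. ?c j / real (deg E (x l)))"
    by (simp add: sum_divide_distrib)
  also have "\<dots> \<le> (\<Sum>j\<in>?N. rr E s w x (x l) j)"
  proof (rule sum_mono)
    fix j assume "j \<in> ?N"
    then have "E (x l) j" by simp
    moreover have "?c j \<le> move_prob E s w x (x l) j" using mp_nonneg[OF wpos spos, of E x "x l" j] by (auto simp: max_def min_def)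
    then have "?c j / real (deg E (x l)) \<le> move_prob E s w x (x l) j / real (deg E (x l))"
      by (rule divide_right_mono) (use dpos in auto)
    ultimately show "?c j / real (deg E (x l)) \<le> rr E s w x (x l) j"
      unfolding rr_def by simp
  qed
  also have "\<dots> \<le> (\<Sum>j\<in>UNIV. rr E s w x (x l) j)"
    by (rule sum_mono2) (simp_all add: rr_nonneg[OF wpos spos])
  finally show ?thesis .
qed



lemma task_move:
  assumes irrefl: "\<forall>i. \<not> E i i" and wpos: "\<forall>l. 0 < w l" and spos: "\<forall>i. s i > 0"
    and v: "v \<noteq> x l"
  shows "pmf (task_step E s w x l) v \<le> rr E s w x (x l) v"
proof (cases "{j. E (x l) j} = {}")
  case True
  then have "task_step E s w x l = return_pmf (x l)" unfolding task_step_def Let_def by simp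
  then show ?thesis using rr_nonneg[OF wpos spos] v by simp
next
  case False
  let ?N = "{j. E (x l) j}"
  let ?c = "\<lambda>j. max 0 (min 1 (move_prob E s w x (x l) j))"
  have dpos: "real (deg E (x l)) > 0" using False unfolding deg_def by (simp add: card_gt_0_iff)
  have "pmf (task_step E s w x l) v = (\<Sum>j\<in>?N. if v = j then ?c j else 0) / real (deg E (x l))"
    unfolding task_pmf_nonempty[where E=E and x=x and l=l, OF irrefl False]
    apply (rule arg_cong2[where f="(/)"])
     apply (rule sum.cong[OF refl])
    using v by auto
  also have "\<dots> = (if E (x l) v then ?c v else 0) / real (deg E (x l))"
    by (simp only: sum.delta' finite) (simp)
  also have "\<dots> \<le> rr E s w x (x l) v"
  proof (cases "E (x l) v")
    case True
    moreover have "?c v \<le> move_prob E s w x (x l) v" using mp_nonneg[OF wpos spos, of E x "x l" v] by (auto simp: max_def min_def)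
    then have "?c v / real (deg E (x l)) \<le> move_prob E s w x (x l) v / real (deg E (x l))"
      by (rule divide_right_mono) (use dpos in auto)
    ultimately show ?thesis unfolding rr_def by simp
  qed (simp add: rr_def)
  finally show ?thesis .
qed




lemma var_ind:
  fixes M :: "'v::finite pmf" and c :: real
  assumes c: "0 < c" "c \<le> 1"
  shows "measure_pmf.variance M (\<lambda>v. if v = i then c else 0) = c^2 * (pmf M i * (1 - pmf M i))"
proof -
  let ?q = "pmf M i"
  have E1: "measure_pmf.expectation M (\<lambda>v. if v = i then c else 0) = c * ?q"
    by (subst integral_measure_pmf_real[where A="{i}"]) (auto split: if_splits)
  have E2: "measure_pmf.expectation M (\<lambda>v. (if v = i then c else 0)^2) = c^2 * ?q"
    by (subst integral_measure_pmf_real[where A="{i}"]) (auto split: if_splits)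
  have "measure_pmf.variance M (\<lambda>v. if v = i then c else 0)
     = measure_pmf.expectation M (\<lambda>v. (if v = i then c else 0)^2) - (measure_pmf.expectation M (\<lambda>v. if v = i then c else 0))^2"
    by (rule prob_space.variance_eq[OF prob_space_measure_pmf]) simp_all
  also have "\<dots> = c^2 * (?q * (1 - ?q))" unfolding E1 E2 by (simp add: power2_eq_square algebra_simps)
  finally show ?thesis .
qed

lemma var_ind_le:
  fixes M :: "'v::finite pmf" and c :: real
  assumes c: "0 < c" "c \<le> 1"
  shows "measure_pmf.variance M (\<lambda>v. if v = i then c else 0) \<le> c * (1 - pmf M i)"
    and "measure_pmf.variance M (\<lambda>v. if v = i then c else 0) \<le> c * pmf M i"
proof -
  let ?q = "pmf M i"
  have q: "0 \<le> ?q" "?q \<le> 1" by (simp_all add: pmf_le_1)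
  have cq: "c * ?q \<le> 1" using q c by (metis mult_le_one less_imp_le)
  have c1: "c * (1 - ?q) \<le> 1" using q c by (intro mult_le_one) auto
  have "c^2 * (?q * (1 - ?q)) = (c * ?q) * (c * (1 - ?q))" by (simp add: power2_eq_square)
  also have "\<dots> \<le> 1 * (c * (1 - ?q))"
    by (rule mult_right_mono) (use cq q c in auto)
  finally have X: "c^2 * (?q * (1 - ?q)) \<le> c * (1 - ?q)" by simp
  show "measure_pmf.variance M (\<lambda>v. if v = i then c else 0) \<le> c * (1 - pmf M i)"
    unfolding var_ind[OF c] by (rule X)
  have "c^2 * (?q * (1 - ?q)) = (c * (1 - ?q)) * (c * ?q)" by (simp add: power2_eq_square)
  also have "\<dots> \<le> 1 * (c * ?q)"
    by (rule mult_right_mono) (use c1 q c in auto)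
  finally have Y: "c^2 * (?q * (1 - ?q)) \<le> c * ?q" by simp
  show "measure_pmf.variance M (\<lambda>v. if v = i then c else 0) \<le> c * pmf M i"
    unfolding var_ind[OF c] by (rule Y)
qed

lemma regroup:
  fixes x :: "'k::finite \<Rightarrow> 'v::finite"
  shows "(\<Sum>l\<in>UNIV. w l * h (x l)) = (\<Sum>k\<in>UNIV. Wt w x k * h k)"
proof -
  have "(\<Sum>k\<in>UNIV. Wt w x k * h k) = (\<Sum>k\<in>UNIV. \<Sum>l\<in>{l\<in>UNIV. x l = k}. w l * h (x l))"
    unfolding Wt_def by (simp add: sum_distrib_right)
  also have "\<dots> = (\<Sum>l\<in>UNIV. w l * h (x l))"
    by (rule sum.group) auto
  finally show ?thesis by simp
qed

lemma alg_aux: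
  fixes W d m a b A :: real
  assumes "W > 0" "d > 0" "m > 0" "a > 0" "b > 0"
  shows "W * (d / m * (A / (a * b * W))) / d = A / (a * m * b)"
  using assms by (simp add: field_simps)

lemma F_eq:
  assumes wbd: "\<forall>l. 0 < w l \<and> w l \<le> 1" and spos: "\<forall>i. s i > 0"
  shows "Wt w x i * rr E s w x i j = (if E i j \<and> load s w x i - load s w x j > 1 / s j then flow E s w x i j else 0)"
proof (cases "E i j \<and> load s w x i - load s w x j > 1 / s j")
  case True
  have wpos: "\<forall>l. 0 < w l" using wbd by blast
  have lj: "load s w x j \<ge> 0" using load_nonneg[OF wpos spos] .
  have sj: "1 / s j > 0" using spos by simp
  have "load s w x i > 0" using True lj sj by linarith
  then have W: "Wt w x i > 0" using spos[rule_format, of i] unfolding load_def by (simp add: zero_less_divide_iff)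
  have dg: "real (deg E i) > 0" using True unfolding deg_def by (auto simp: card_gt_0_iff)
  have dm: "real (dmax E i j) > 0" using dg unfolding dmax_def by simp
  have a: "alpha s > 0" using alpha_pos[OF spos] .
  have si: "1 / s i + 1 / s j > 0" using spos by (simp add: add_pos_pos)
  have "Wt w x i * rr E s w x i j = Wt w x i * (real (deg E i) / real (dmax E i j) *
           ((load s w x i - load s w x j) / (alpha s * (1 / s i + 1 / s j) * Wt w x i))) / real (deg E i)"
    unfolding rr_def move_prob_def using True by simp
  also have "\<dots> = flow E s w x i j"
    unfolding flow_def using alg_aux[OF W dg dm a si] .
  finally show ?thesis using True by simp
next
  case False
  then show ?thesis unfolding rr_def move_prob_def by auto
qed




theorem lemma34:
  fixes E :: "'v::finite \<Rightarrow> 'v \<Rightarrow> bool" and s :: "'v \<Rightarrow> real"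
    and w :: "'k::finite \<Rightarrow> real" and x :: "'k \<Rightarrow> 'v"
  assumes sym: "\<forall>i j. E i j \<longrightarrow> E j i"
    and irrefl: "\<forall>i. \<not> E i i"
    and spos: "\<forall>i. s i > 0"
    and wbd: "\<forall>l. 0 < w l \<and> w l \<le> 1"
  shows "(\<Sum>i\<in>UNIV. measure_pmf.variance (round_pmf E s w x) (\<lambda>y. Wt w y i) / s i)
         \<le> (\<Sum>(i, j)\<in>{(i, j). E i j \<and> load s w x i - load s w x j > 1 / s j}.
               flow E s w x i j * (1 / s i + 1 / s j))"
proof -
  have wpos: "\<forall>l. 0 < w l" using wbd by blast
  define S where "S k = (\<Sum>j\<in>UNIV. rr E s w x k j)" for k
  define B where "B i k = (if k = i then S k else 0) + rr E s w x k i" for i k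
  define F where "F i j = Wt w x i * rr E s w x i j" for i j
  define C where "C = {(i, j). E i j \<and> load s w x i - load s w x j > 1 / s j}"
  have Wsum: "Wt w y i = (\<Sum>l\<in>UNIV. (\<lambda>l v. if v = i then w l else 0) l (y l))" for y :: "'k \<Rightarrow> 'v" and i
    unfolding Wt_def by (simp add: sum.If_cases)
  have var_eq: "measure_pmf.variance (round_pmf E s w x) (\<lambda>y. Wt w y i)
      = (\<Sum>l\<in>UNIV. measure_pmf.variance (task_step E s w x l) (\<lambda>v. if v = i then w l else 0))" for i
    unfolding Wsum round_pmf_def by (rule Pi_var_sum)
  have bnd: "measure_pmf.variance (task_step E s w x l) (\<lambda>v. if v = i then w l else 0) \<le> w l * B i (x l)" for l i
  proof (cases "x l = i")
    case True
    have "measure_pmf.variance (task_step E s w x l) (\<lambda>v. if v = i then w l else 0)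
        \<le> w l * (1 - pmf (task_step E s w x l) i)"
      using wbd by (intro var_ind_le(1)) auto
    also have "\<dots> \<le> w l * S (x l)"
      using task_stay[where E=E and w=w and s=s and x=x and l=l, OF irrefl wpos spos] True wpos[rule_format, of l] unfolding S_def
      by (intro mult_left_mono) auto
    also have "\<dots> \<le> w l * B i (x l)"
      unfolding B_def using True rr_nonneg[OF wpos spos] wpos[rule_format, of l]
      by (intro mult_left_mono) (auto simp: less_imp_le)
    finally show ?thesis .
  next
    case False
    have "measure_pmf.variance (task_step E s w x l) (\<lambda>v. if v = i then w l else 0)
        \<le> w l * pmf (task_step E s w x l) i"
      using wbd by (intro var_ind_le(2)) auto
    also have "\<dots> \<le> w l * rr E s w x (x l) i"
      using task_move[where E=E and w=w and s=s and x=x and l=l and v=i, OF irrefl wpos spos] False wpos[rule_format, of l]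
      by (intro mult_left_mono) (auto simp: less_imp_le)
    also have "\<dots> = w l * B i (x l)"
      unfolding B_def using False by simp
    finally show ?thesis .
  qed
  have step1: "measure_pmf.variance (round_pmf E s w x) (\<lambda>y. Wt w y i) \<le> (\<Sum>k\<in>UNIV. Wt w x k * B i k)" for i
  proof -
    have "measure_pmf.variance (round_pmf E s w x) (\<lambda>y. Wt w y i) \<le> (\<Sum>l\<in>UNIV. w l * B i (x l))"
      unfolding var_eq by (rule sum_mono) (rule bnd)
    also have "\<dots> = (\<Sum>k\<in>UNIV. Wt w x k * B i k)" by (rule regroup)
    finally show ?thesis .
  qed
  have step2: "(\<Sum>k\<in>UNIV. Wt w x k * B i k) = (\<Sum>j\<in>UNIV. F i j) + (\<Sum>k\<in>UNIV. F k i)" for i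
  proof -
    have "(\<Sum>k\<in>UNIV. Wt w x k * B i k) = (\<Sum>k\<in>UNIV. (if k = i then Wt w x k * S k else 0)) + (\<Sum>k\<in>UNIV. F k i)"
    proof -
      have "Wt w x k * B i k = (if k = i then Wt w x k * S k else 0) + F k i" for k
        unfolding B_def F_def by (simp add: distrib_left)
      then show ?thesis by (simp add: sum.distrib)
    qed
    also have "(\<Sum>k\<in>UNIV. (if k = i then Wt w x k * S k else 0)) = Wt w x i * S i"
      by simp
    also have "\<dots> = (\<Sum>j\<in>UNIV. F i j)" unfolding S_def F_def by (simp add: sum_distrib_left)
    finally show ?thesis .
  qed
  have LHS: "(\<Sum>i\<in>UNIV. measure_pmf.variance (round_pmf E s w x) (\<lambda>y. Wt w y i) / s i)
      \<le> (\<Sum>i\<in>UNIV. ((\<Sum>j\<in>UNIV. F i j) + (\<Sum>k\<in>UNIV. F k i)) / s i)"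
    by (rule sum_mono, unfold step2[symmetric], rule divide_right_mono[OF step1])
       (use spos in \<open>simp add: less_imp_le\<close>)
  have mid: "(\<Sum>i\<in>UNIV. ((\<Sum>j\<in>UNIV. F i j) + (\<Sum>k\<in>UNIV. F k i)) / s i)
      = (\<Sum>i\<in>UNIV. \<Sum>j\<in>UNIV. F i j * (1 / s i + 1 / s j))"
  proof -
    have "(\<Sum>i\<in>UNIV. ((\<Sum>j\<in>UNIV. F i j) + (\<Sum>k\<in>UNIV. F k i)) / s i)
        = (\<Sum>i\<in>UNIV. \<Sum>j\<in>UNIV. F i j / s i) + (\<Sum>i\<in>UNIV. \<Sum>k\<in>UNIV. F k i / s i)"
      by (simp add: add_divide_distrib sum.distrib sum_divide_distrib)
    also have "(\<Sum>i\<in>UNIV. \<Sum>k\<in>UNIV. F k i / s i) = (\<Sum>k\<in>UNIV. \<Sum>i\<in>UNIV. F k i / s i)"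
      by (rule sum.swap)
    finally show ?thesis
      by (simp add: distrib_left sum.distrib)
  qed
  have RHS: "(\<Sum>(i, j)\<in>C. flow E s w x i j * (1 / s i + 1 / s j))
      = (\<Sum>i\<in>UNIV. \<Sum>j\<in>UNIV. F i j * (1 / s i + 1 / s j))"
  proof -
    have "(\<Sum>(i, j)\<in>C. flow E s w x i j * (1 / s i + 1 / s j))
        = (\<Sum>p\<in>UNIV. if p \<in> C then (case p of (i, j) \<Rightarrow> flow E s w x i j * (1 / s i + 1 / s j)) else 0)"
      using sum.inter_restrict[of "UNIV :: ('v \<times> 'v) set" "\<lambda>p. case p of (i, j) \<Rightarrow> flow E s w x i j * (1 / s i + 1 / s j)" C]
      by simp
    also have "\<dots> = (\<Sum>p\<in>UNIV. case p of (i, j) \<Rightarrow> F i j * (1 / s i + 1 / s j))"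
      by (rule sum.cong[OF refl]) (auto simp: F_def F_eq[OF wbd spos] C_def split: if_splits)
    also have "\<dots> = (\<Sum>i\<in>UNIV. \<Sum>j\<in>UNIV. F i j * (1 / s i + 1 / s j))"
      unfolding UNIV_Times_UNIV[symmetric] sum.cartesian_product[symmetric] by simp
    finally show ?thesis .
  qed
  show ?thesis using LHS mid RHS unfolding C_def by simp
qed


end
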